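(* Let $n\geq 7$ and $p\geq 2$. Then $\rho(\mathbf{S}_{p}(U_{5}))<\rho(\mathbf{S}_{p}(U_{4}))$.
   Context: All graphs are simple and connected; $d_i$ is the degree of $v_i$. The $p$-Sombor matrix $\mathbf{S}_{p}(G)$ has $(i,j)$-entry $(d_i^{p}+d_j^{p})^{1/p}$ if $v_iv_j\in E(G)$ and $0$ otherwise; $\rho(\mathbf{S}_{p}(G))$ is its largest eigenvalue. $U_4$ is the unicyclic graph of order $n$ consisting of a triangle $xyz$, with $n-5$ pendant vertices attached to $x$ and $2$ pendant vertices attached to $y$. $U_5$ is the unicyclic graph of order $n$ consisting of a triangle $xyz$, a vertex $w$ adjacent to $x$, and $n-4$ pendant vertices attached to $w$. *)

theory Defs
  imports Complex_Main "Jordan_Normal_Form.Char_Poly"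
begin

text \<open>Simple graphs on the vertex set {0..<n}, given by a symmetric irreflexive
  adjacency predicate.\<close>

definition deg :: "nat \<Rightarrow> (nat \<Rightarrow> nat \<Rightarrow> bool) \<Rightarrow> nat \<Rightarrow> nat" where
  "deg n E i = card {j. j < n \<and> E i j}"

definition sombor_mat :: "real \<Rightarrow> nat \<Rightarrow> (nat \<Rightarrow> nat \<Rightarrow> bool) \<Rightarrow> real mat" where
  "sombor_mat p n E = mat n n (\<lambda>(i,j). if E i j
      then (real (deg n E i) powr p + real (deg n E j) powr p) powr (1 / p) else 0)"

definition rho :: "real mat \<Rightarrow> real" where
  "rho A = Max {k. eigenvalue A k}"

definition undirected :: "(nat \<times> nat) set \<Rightarrow> nat \<Rightarrow> nat \<Rightarrow> bool" where
  "undirected S i j \<longleftrightarrow> (i, j) \<in> S \<or> (j, i) \<in> S"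

text \<open>U_4: triangle x=0, y=1, z=2; pendant vertices 3,4 attached to y;
  pendant vertices 5..n-1 (n-5 of them) attached to x.\<close>
definition U4 :: "nat \<Rightarrow> nat \<Rightarrow> nat \<Rightarrow> bool" where
  "U4 n = undirected ({(0,1),(1,2),(0,2),(1,3),(1,4)} \<union> {(0,k) | k. 5 \<le> k \<and> k < n})"

text \<open>U_5: triangle x=0, y=1, z=2; vertex w=3 adjacent to x;
  pendant vertices 4..n-1 (n-4 of them) attached to w.\<close>
definition U5 :: "nat \<Rightarrow> nat \<Rightarrow> nat \<Rightarrow> bool" where
  "U5 n = undirected ({(0,1),(1,2),(0,2),(0,3)} \<union> {(3,k) | k. 4 \<le> k \<and> k < n})"

end

theory Submission
  imports Defs
begin


definition sw :: "real \<Rightarrow> real \<Rightarrow> real \<Rightarrow> real" where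
  "sw p x y = (x powr p + y powr p) powr (1/p)"

lemma sw_comm: "sw p x y = sw p y x" unfolding sw_def by (simp add: add.commute)

lemma sw_nonneg: "0 \<le> sw p x y" unfolding sw_def by simp

lemma sw_ge: assumes "0 \<le> x" "0 \<le> y" "0 < p" shows "x \<le> sw p x y"
proof -
  have "x = (x powr p) powr (1/p)" using assms by (simp add: powr_powr)
  also have "\<dots> \<le> sw p x y" unfolding sw_def
    by (rule powr_mono2) (use assms in auto)
  finally show ?thesis .
qed

lemma sw_mono: assumes "0 \<le> x" "0 \<le> y" "x \<le> x'" "y \<le> y'" "0 < p"
  shows "sw p x y \<le> sw p x' y'"
  unfolding sw_def
  apply (rule powr_mono2)
  using assms by (auto intro!: add_mono powr_mono2)

lemma sw_sq_le: assumes "0 \<le> x" "0 \<le> y" "2 \<le> p"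
  shows "(sw p x y)^2 \<le> x^2 + y^2"
proof (cases "x^2 + y^2 = 0")
  case True
  then have "x = 0" "y = 0" using assms by (auto simp: add_nonneg_eq_0_iff)
  then show ?thesis by (simp add: sw_def)
next
  case False
  define s where "s = sqrt (x^2 + y^2)"
  have "0 < x^2+y^2" using False by (smt (verit) sum_power2_ge_zero)
  hence s0: "0 < s" using s_def by simp
  have xs: "x \<le> s" "y \<le> s" unfolding s_def using assms
    by (auto intro!: real_le_rsqrt)
  have key: "\<And>u. 0 \<le> u \<Longrightarrow> u \<le> s \<Longrightarrow> u powr p \<le> s powr p * (u/s)^2"
  proof -
    fix u assume u: "0 \<le> u" "u \<le> s"
    have "(u/s) powr p \<le> (u/s) powr 2"
      using u s0 assms by (intro powr_mono') auto
    also have "(u/s) powr 2 = (u/s)^2" using u s0 by (simp add: powr_numeral)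
    finally have "(u/s) powr p \<le> (u/s)^2" .
    hence "s powr p * (u/s) powr p \<le> s powr p * (u/s)^2" by (simp add: mult_left_mono)
    moreover have "s powr p * (u/s) powr p = u powr p" using u s0
      by (simp add: powr_divide)
    ultimately show "u powr p \<le> s powr p * (u/s)^2" by simp
  qed
  have "x powr p + y powr p \<le> s powr p * ((x/s)^2 + (y/s)^2)"
    using key[of x] key[of y] xs assms by (simp add: distrib_left)
  also have "(x/s)^2 + (y/s)^2 = 1"
  proof -
    have "s^2 = x^2 + y^2" unfolding s_def by simp
    have "(x/s)^2 + (y/s)^2 = (x^2+y^2)/s^2" by (simp add: power_divide add_divide_distrib)
    also have "\<dots> = 1" by (subst \<open>s^2 = x^2 + y^2\<close>[symmetric]) (use s0 in simp)
    finally show ?thesis .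
  qed
  finally have "x powr p + y powr p \<le> s powr p" by simp
  hence "sw p x y \<le> (s powr p) powr (1/p)" unfolding sw_def
    by (intro powr_mono2) (use assms in auto)
  also have "\<dots> = s" using s0 assms by (simp add: powr_powr)
  finally have "sw p x y \<le> s" .
  hence "(sw p x y)^2 \<le> s^2" using sw_nonneg by (simp add: power_mono)
  also have "s^2 = x^2 + y^2" unfolding s_def using assms by simp
  finally show ?thesis .
qed

lemma eigenvalueI_vec:
  fixes M :: "real mat"
  assumes M: "M \<in> carrier_mat n n" and i0: "i0 < n" and nz: "f i0 \<noteq> 0"
    and eq: "\<And>i. i < n \<Longrightarrow> (M *\<^sub>v vec n f) $ i = t * f i"
  shows "eigenvalue M t"
  unfolding eigenvalue_def eigenvector_def
proof (intro exI conjI)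
  show "vec n f \<in> carrier_vec (dim_row M)" using M by simp
  show "vec n f \<noteq> 0\<^sub>v (dim_row M)"
  proof
    assume "vec n f = 0\<^sub>v (dim_row M)"
    hence "vec n f $ i0 = 0\<^sub>v n $ i0" using M by simp
    thus False using i0 nz by simp
  qed
  show "M *\<^sub>v vec n f = t \<cdot>\<^sub>v vec n f"
    by (rule eq_vecI) (use M eq in auto)
qed

lemma mv_sum:
  fixes M :: "real mat"
  assumes M: "M \<in> carrier_mat n n" and v: "v \<in> carrier_vec n" and i: "i < n"
  shows "(M *\<^sub>v v) $ i = (\<Sum>j<n. M $$ (i,j) * v $ j)"
  using M v i by (auto simp: mult_mat_vec_def scalar_prod_def lessThan_atLeast0 intro!: sum.cong)

lemma eigenvalue_bound:
  fixes M :: "real mat"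
  assumes M: "M \<in> carrier_mat n n"
    and nonneg: "\<And>i j. i < n \<Longrightarrow> j < n \<Longrightarrow> 0 \<le> M $$ (i,j)"
    and xpos: "\<And>i. i < n \<Longrightarrow> 0 < x $ i" and x: "x \<in> carrier_vec n"
    and sup: "\<And>i. i < n \<Longrightarrow> (M *\<^sub>v x) $ i < t * x $ i"
    and ev: "eigenvalue M k"
  shows "k < t"
proof -
  from ev obtain v where v: "v \<in> carrier_vec n" "v \<noteq> 0\<^sub>v n" "M *\<^sub>v v = k \<cdot>\<^sub>v v"
    unfolding eigenvalue_def eigenvector_def using M by auto
  have "\<exists>i0<n. v $ i0 \<noteq> 0"
  proof (rule ccontr)
    assume "\<not> ?thesis"
    hence "v = 0\<^sub>v n" using v(1) by (intro eq_vecI) auto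
    thus False using v(2) by simp
  qed
  then obtain i0 where i0: "i0 < n" "v $ i0 \<noteq> 0" by auto
  define r where "r = Max ((\<lambda>i. \<bar>v $ i\<bar> / x $ i) ` {0..<n})"
  have rge: "\<And>j. j < n \<Longrightarrow> \<bar>v $ j\<bar> / x $ j \<le> r" unfolding r_def by (intro Max_ge) auto
  have "r \<in> (\<lambda>i. \<bar>v $ i\<bar> / x $ i) ` {0..<n}" unfolding r_def using i0 by (intro Max_in) auto
  then obtain i where i: "i < n" "r = \<bar>v $ i\<bar> / x $ i" by auto
  have "0 < \<bar>v $ i0\<bar> / x $ i0" using i0 xpos by simp
  hence rpos: "0 < r" using rge[OF i0(1)] by simp
  have vj: "\<And>j. j < n \<Longrightarrow> \<bar>v $ j\<bar> \<le> r * x $ j"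
    using rge xpos by (simp add: divide_le_eq)
  have vi: "\<bar>v $ i\<bar> = r * x $ i" using i xpos[OF i(1)] by simp
  have "(M *\<^sub>v v) $ i = k * v $ i" using v i by simp
  moreover have "(M *\<^sub>v v) $ i = (\<Sum>j<n. M $$ (i,j) * v $ j)"
    by (rule mv_sum[OF M v(1) i(1)])
  ultimately have "\<bar>k\<bar> * \<bar>v $ i\<bar> = \<bar>\<Sum>j<n. M $$ (i,j) * v $ j\<bar>" by (simp add: abs_mult)
  also have "\<dots> \<le> (\<Sum>j<n. M $$ (i,j) * \<bar>v $ j\<bar>)"
    by (rule order_trans[OF sum_abs]) (use nonneg i in \<open>simp add: abs_mult\<close>)
  also have "\<dots> \<le> (\<Sum>j<n. M $$ (i,j) * (r * x $ j))"
    by (intro sum_mono mult_left_mono) (use nonneg i vj in auto)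
  also have "\<dots> = r * (M *\<^sub>v x) $ i"
    unfolding mv_sum[OF M x i(1)] by (simp add: sum_distrib_left ac_simps)
  also have "\<dots> < r * (t * x $ i)" using sup[OF i(1)] rpos by simp
  also have "\<dots> = t * \<bar>v $ i\<bar>" using vi by simp
  finally have "\<bar>k\<bar> * \<bar>v $ i\<bar> < t * \<bar>v $ i\<bar>" .
  hence "\<bar>k\<bar> < t" using vi rpos xpos[OF i(1)]
    by (metis abs_ge_zero mult_less_cancel_right not_less)
  thus ?thesis by simp
qed

lemma finite_eigenvalues:
  fixes M :: "real mat"
  assumes M: "M \<in> carrier_mat n n"
  shows "finite {k. eigenvalue M k}"
proof -
  have "char_poly M \<noteq> 0" using degree_monic_char_poly[OF M] by auto
  hence "finite {k. poly (char_poly M) k = 0}" by (rule poly_roots_finite)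
  thus ?thesis using eigenvalue_root_char_poly[OF M] by simp
qed

lemma sombor_carrier: "sombor_mat p n E \<in> carrier_mat n n"
  unfolding sombor_mat_def by simp

lemma sombor_entry: "i < n \<Longrightarrow> j < n \<Longrightarrow> sombor_mat p n E $$ (i,j) =
  (if E i j then sw p (real (deg n E i)) (real (deg n E j)) else 0)"
  unfolding sombor_mat_def sw_def by simp

lemma sombor_row:
  assumes i: "i < n" and v: "v \<in> carrier_vec n"
  shows "(sombor_mat p n E *\<^sub>v v) $ i =
    (\<Sum>j\<in>{j. j < n \<and> E i j}. sw p (real (deg n E i)) (real (deg n E j)) * v $ j)"
proof -
  have "(sombor_mat p n E *\<^sub>v v) $ i = (\<Sum>j<n. sombor_mat p n E $$ (i,j) * v $ j)"
    by (rule mv_sum[OF sombor_carrier v i])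
  also have "\<dots> = (\<Sum>j<n. if E i j then sw p (real (deg n E i)) (real (deg n E j)) * v $ j else 0)"
    using i by (intro sum.cong) (auto simp: sombor_entry)
  also have "\<dots> = (\<Sum>j\<in>{j\<in>{..<n}. E i j}. sw p (real (deg n E i)) (real (deg n E j)) * v $ j)"
    by (rule sum.inter_filter[symmetric]) simp
  also have "{j\<in>{..<n}. E i j} = {j. j < n \<and> E i j}" by auto
  finally show ?thesis .
qed

lemma sombor_nonneg: "i < n \<Longrightarrow> j < n \<Longrightarrow> 0 \<le> sombor_mat p n E $$ (i,j)"
  by (simp add: sombor_entry sw_nonneg)

lemma U4_nb:
  assumes "n \<ge> 7"
  shows "{j. j < n \<and> U4 n 0 j} = {1,2} \<union> {5..<n}"
    "{j. j < n \<and> U4 n 1 j} = {0,2,3,4}"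
    "{j. j < n \<and> U4 n 2 j} = {0,1}"
    "{j. j < n \<and> U4 n 3 j} = {1}"
    "{j. j < n \<and> U4 n 4 j} = {1}"
    "5 \<le> k \<Longrightarrow> k < n \<Longrightarrow> {j. j < n \<and> U4 n k j} = {0}"
  using assms by (auto simp: U4_def undirected_def)

lemma U5_nb:
  assumes "n \<ge> 7"
  shows "{j. j < n \<and> U5 n 0 j} = {1,2,3}"
    "{j. j < n \<and> U5 n 1 j} = {0,2}"
    "{j. j < n \<and> U5 n 2 j} = {0,1}"
    "{j. j < n \<and> U5 n 3 j} = {0} \<union> {4..<n}"
    "4 \<le> k \<Longrightarrow> k < n \<Longrightarrow> {j. j < n \<and> U5 n k j} = {3}"
  using assms by (auto simp: U5_def undirected_def)

lemma U4_deg: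
  assumes "n \<ge> 7"
  shows "deg n (U4 n) 0 = n - 3" "deg n (U4 n) 1 = 4" "deg n (U4 n) 2 = 2"
    "deg n (U4 n) 3 = 1" "deg n (U4 n) 4 = 1"
    "5 \<le> k \<Longrightarrow> k < n \<Longrightarrow> deg n (U4 n) k = 1"
  unfolding deg_def
  subgoal unfolding U4_nb(1)[OF assms] using assms by (simp add: card_Un_disjoint)
  subgoal unfolding U4_nb(2)[OF assms] by simp
  subgoal unfolding U4_nb(3)[OF assms] by simp
  subgoal unfolding U4_nb(4)[OF assms] by simp
  subgoal unfolding U4_nb(5)[OF assms] by simp
  subgoal using U4_nb(6)[OF assms] by simp
  done

lemma U5_deg:
  assumes "n \<ge> 7"
  shows "deg n (U5 n) 0 = 3" "deg n (U5 n) 1 = 2" "deg n (U5 n) 2 = 2"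
    "deg n (U5 n) 3 = n - 3"
    "4 \<le> k \<Longrightarrow> k < n \<Longrightarrow> deg n (U5 n) k = 1"
  unfolding deg_def
  subgoal unfolding U5_nb(1)[OF assms] by simp
  subgoal unfolding U5_nb(2)[OF assms] by simp
  subgoal unfolding U5_nb(3)[OF assms] by simp
  subgoal unfolding U5_nb(4)[OF assms] using assms by (simp add: card_Un_disjoint)
  subgoal using U5_nb(5)[OF assms] by simp
  done



definition bb :: "real \<Rightarrow> real \<Rightarrow> real \<Rightarrow> real \<Rightarrow> real \<Rightarrow> real" where
  "bb A B C Dw t = (A*t + C*B)/(t^2 - (2*Dw^2+C^2))"
definition cc :: "real \<Rightarrow> real \<Rightarrow> real \<Rightarrow> real \<Rightarrow> real \<Rightarrow> real" where
  "cc A B C Dw t = ((t - 2*Dw^2/t)*B + C*A)/(t^2 - (2*Dw^2+C^2))"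
definition GG :: "real \<Rightarrow> real \<Rightarrow> real \<Rightarrow> real \<Rightarrow> real \<Rightarrow> real \<Rightarrow> real \<Rightarrow> real" where
  "GG D A B C Dw E t = t^2 - (D-2)*E^2 - t*(A * bb A B C Dw t + B * cc A B C Dw t)"

lemma S_ident:
  assumes t: "t \<noteq> 0" and d: "t^2 - (2*Dw^2+C^2) \<noteq> 0"
  shows "t*(A * bb A B C Dw t + B * cc A B C Dw t) =
    A^2 + B^2 + (A^2*(2*Dw^2+C^2) + B^2*C^2 + 2*A*B*C*t)/(t^2 - (2*Dw^2+C^2))"
proof -
  define \<Delta> where "\<Delta> = t^2 - (2*Dw^2+C^2)"
  have d': "\<Delta> \<noteq> 0" using d \<Delta>_def by simp
  have e1: "t * (t - 2*Dw^2/t) = t^2 - 2*Dw^2" using t by (simp add: field_simps power2_eq_square)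
  have "t*(A * bb A B C Dw t + B * cc A B C Dw t) =
      (A*(A*t + C*B)*t + B*(t*(t - 2*Dw^2/t)*B + C*A*t))/\<Delta>"
  proof -
    have g: "\<And>X Y. t*(A*(X/\<Delta>) + B*(Y/\<Delta>)) = (A*X*t + B*(t*Y))/\<Delta>"
      using d' by (simp add: field_simps)
    show ?thesis unfolding bb_def cc_def \<Delta>_def[symmetric] g by (simp add: algebra_simps)
  qed
  also have "\<dots> = (A*(A*t + C*B)*t + B*((t^2 - 2*Dw^2)*B + C*A*t))/\<Delta>" by (simp only: e1)
  also have "\<dots> = ((A^2 + B^2)*\<Delta> + (A^2*(2*Dw^2+C^2) + B^2*C^2 + 2*A*B*C*t))/\<Delta>"
    by (rule arg_cong[where f="\<lambda>x. x/\<Delta>"]) (simp add: \<Delta>_def algebra_simps power2_eq_square)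
  also have "\<dots> = A^2 + B^2 + (A^2*(2*Dw^2+C^2) + B^2*C^2 + 2*A*B*C*t)/\<Delta>"
    using d' by (simp add: add_divide_distrib)
  finally show ?thesis unfolding \<Delta>_def .
qed

lemma key_ineq:
  fixes t K A B C E W P R S N \<Delta> Q :: real
  assumes t8: "8 \<le> t" and K48: "48 \<le> K" and \<Delta>: "\<Delta> = t^2 - K" "0 < \<Delta>"
    and AW: "W \<le> A" "0 < W" and BE: "E \<le> B" "0 < E" and C0: "0 < C"
    and P13: "P^2 \<le> 13" and R: "0 < R" "R < 3"
    and N: "N = A^2*K + B^2*C^2 + 2*A*B*C*t"
    and S: "S = A^2 + B^2 + N/\<Delta>"
    and Q: "Q = t*(t-R) - 2*P^2"
  shows "0 < Q" "Q * (S - E^2) > W^2 * (t*(t-R))"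
proof -
  have tR: "t - R > 5" using t8 R by simp
  have "t*(t-R) \<ge> 8*5" using t8 tR by (intro mult_mono) auto
  thus Qpos: "0 < Q" using Q P13 by simp
  have A0: "0 < A" using AW by simp
  have B0: "0 < B" using BE by simp
  have f1: "K*(t-R) \<ge> 48*(t-3)" using K48 tR R by (intro mult_mono) auto
  have f2: "48*(t-3) \<ge> 26*t" using t8 by simp
  have f3: "26*t \<ge> 2*P^2*t" using P13 t8 by (intro mult_right_mono) auto
  have "K*(t-R) - 2*P^2*t \<ge> 0" using f1 f2 f3 by linarith
  hence "t*(K*(t-R) - 2*P^2*t) \<ge> 0" using t8 by simp
  moreover have "Q*K - 2*P^2*\<Delta> = t*(K*(t-R) - 2*P^2*t)"
    unfolding Q \<Delta> by (simp add: algebra_simps power2_eq_square)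
  ultimately have QK: "Q*K \<ge> 2*P^2*\<Delta>" by simp
  have "Q*(A^2*K) \<ge> A^2*(2*P^2*\<Delta>)" using QK
    by (metis mult.left_commute mult_left_mono zero_le_power2)
  moreover have "A^2*(2*P^2*\<Delta>) \<ge> W^2*(2*P^2*\<Delta>)"
    using AW \<Delta> by (intro mult_right_mono power_mono) auto
  ultimately have QA: "Q*(A^2*K) \<ge> W^2*(2*P^2*\<Delta>)" by linarith
  have "N > A^2*K" unfolding N using A0 B0 C0 t8 by (simp add: add_pos_nonneg)
  hence "Q*N > Q*(A^2*K)" using Qpos by simp
  hence "Q*N > W^2*(2*P^2*\<Delta>)" using QA by linarith
  hence "W^2*(2*P^2)*\<Delta> < Q*N" by (simp only: mult.assoc)
  hence "W^2*(2*P^2) < (Q*N)/\<Delta>" by (subst pos_less_divide_eq[OF \<Delta>(2)])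
  hence QN: "Q*(N/\<Delta>) > W^2*(2*P^2)" by simp
  have "S - E^2 \<ge> W^2 + N/\<Delta>"
  proof -
    have "A^2 \<ge> W^2" using AW by (intro power_mono) auto
    moreover have "B^2 \<ge> E^2" using BE by (intro power_mono) auto
    ultimately show ?thesis unfolding S by simp
  qed
  hence "Q*(S - E^2) \<ge> Q*(W^2 + N/\<Delta>)" using Qpos by (intro mult_left_mono) auto
  moreover have "Q*(W^2 + N/\<Delta>) > Q*W^2 + W^2*(2*P^2)" using QN by (simp add: distrib_left)
  moreover have "Q*W^2 + W^2*(2*P^2) = W^2*(t*(t-R))" unfolding Q by (simp add: algebra_simps)
  ultimately show "Q * (S - E^2) > W^2 * (t*(t-R))" by linarith
qed

lemma exists_root:
  fixes D A B C Dw E :: real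
  assumes D4: "4 \<le> D" and hA: "D \<le> A" and hB: "D \<le> B" and hE: "D \<le> E" "E^2 \<le> D^2+1"
    and hDw: "4 \<le> Dw" "Dw^2 \<le> 17" and hC: "4 \<le> C" "C^2 \<le> 20"
  obtains t where "8 \<le> t" "D^3 \<le> t^2" "0 < t^2 - (2*Dw^2+C^2)" "GG D A B C Dw E t = 0"
proof -
  define K where "K = 2*Dw^2+C^2"
  have "Dw^2 \<ge> 4^2" "C^2 \<ge> 4^2" using hDw hC by (intro power_mono; simp)+
  hence K48: "48 \<le> K" and K54: "K \<le> 54" using hDw hC unfolding K_def by auto
  define l0 where "l0 = D * sqrt D"
  have sD: "2 \<le> sqrt D" using D4 by (intro real_le_rsqrt) simp
  have "4*2 \<le> D * sqrt D" by (rule mult_mono) (use D4 sD in auto)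
  hence l08: "8 \<le> l0" unfolding l0_def by simp
  have l0sq: "l0^2 = D^3" unfolding l0_def using D4 by (simp add: power_mult_distrib power3_eq_cube power2_eq_square)
  have D64: "64 \<le> D^3"
  proof -
    have "(4::real)^3 \<le> D^3" using D4 by (intro power_mono) auto
    thus ?thesis by simp
  qed
  have A0: "0 < A" and B0: "0 < B" and C0: "0 < C" and E0: "0 < E" using D4 hA hB hC hE by auto
  have big: "\<And>t. l0 \<le> t \<Longrightarrow> 0 < t \<and> D^3 \<le> t^2 \<and> 0 < t^2 - K"
  proof -
    fix t assume "l0 \<le> t"
    hence "l0^2 \<le> t^2" "0 < t" using l08 by (auto intro: power_mono)
    thus "0 < t \<and> D^3 \<le> t^2 \<and> 0 < t^2 - K" using l0sq D64 K54 by auto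
  qed
  have Sform: "\<And>t. l0 \<le> t \<Longrightarrow> t*(A * bb A B C Dw t + B * cc A B C Dw t) =
     A^2 + B^2 + (A^2*K + B^2*C^2 + 2*A*B*C*t)/(t^2 - K)"
  proof -
    fix t assume "l0 \<le> t"
    hence h: "0 < t" "0 < t^2 - K" using big by auto
    show "t*(A * bb A B C Dw t + B * cc A B C Dw t) =
     A^2 + B^2 + (A^2*K + B^2*C^2 + 2*A*B*C*t)/(t^2 - K)"
      unfolding K_def by (rule S_ident) (use h in \<open>auto simp: K_def\<close>)
  qed
  have G0: "GG D A B C Dw E l0 \<le> 0"
  proof -
    have "0 \<le> (A^2*K + B^2*C^2 + 2*A*B*C*l0)/(l0^2 - K)"
      using big[of l0] A0 B0 C0 l08 K48 by (intro divide_nonneg_pos) auto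
    hence S1: "l0*(A * bb A B C Dw l0 + B * cc A B C Dw l0) \<ge> A^2 + B^2" using Sform[of l0] by simp
    have "A^2 \<ge> D^2" "B^2 \<ge> D^2" "E^2 \<ge> D^2" using hA hB hE D4 by (intro power_mono; simp)+
    hence "(D-2)*E^2 \<ge> (D-2)*D^2" using D4 by (intro mult_left_mono) auto
    moreover have "D^3 - (D-2)*D^2 - 2*D^2 = 0" by (simp add: algebra_simps power2_eq_square power3_eq_cube)
    ultimately show ?thesis unfolding GG_def using S1 l0sq \<open>A^2 \<ge> D^2\<close> \<open>B^2 \<ge> D^2\<close> by linarith
  qed
  define Q1 where "Q1 = A^2*K + B^2*C^2 + 2*A*B*C"
  have Q10: "0 \<le> Q1" unfolding Q1_def using A0 B0 C0 K48 by simp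
  define l1 where "l1 = l0 + 2*K + (D-2)*E^2 + A^2 + B^2 + 2*Q1 + 1"
  have DE: "0 \<le> (D-2)*E^2" using D4 by simp
  have l01: "l0 \<le> l1" unfolding l1_def using K48 DE Q10 by simp
  have G1: "0 \<le> GG D A B C Dw E l1"
  proof -
    have l11: "1 \<le> l1" "2*K \<le> l1" "(D-2)*E^2 + A^2 + B^2 + 2*Q1 \<le> l1"
      unfolding l1_def using K48 DE Q10 l08 by auto
    have sq: "l1 \<le> l1^2" using l11 by (simp add: power2_eq_square)
    have \<Delta>pos: "0 < l1^2 - K" using big[OF l01] by simp
    have "A^2*K + B^2*C^2 + 2*A*B*C*l1 \<le> Q1*l1"
    proof -
      have "0 \<le> A^2*K + B^2*C^2" using K48 by simp
      hence "A^2*K + B^2*C^2 \<le> (A^2*K + B^2*C^2)*l1" using l11 by (simp add: mult_le_cancel_left1)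
      thus ?thesis unfolding Q1_def by (simp add: algebra_simps)
    qed
    also have "Q1*l1 \<le> Q1*l1^2" using sq Q10 by (intro mult_left_mono)
    also have "\<dots> \<le> 2*Q1*(l1^2 - K)"
    proof -
      have "0 \<le> Q1*(l1^2-2*K)" using sq l11 Q10 by simp
      moreover have "2*Q1*(l1^2-K) - Q1*l1^2 = Q1*(l1^2-2*K)" by (simp add: algebra_simps)
      ultimately show ?thesis by linarith
    qed
    finally have "(A^2*K + B^2*C^2 + 2*A*B*C*l1)/(l1^2 - K) \<le> 2*Q1"
      using \<Delta>pos by (simp add: divide_le_eq mult.commute)
    hence "l1*(A * bb A B C Dw l1 + B * cc A B C Dw l1) \<le> A^2 + B^2 + 2*Q1" using Sform[OF l01] by simp
    thus ?thesis unfolding GG_def using sq l11 by linarith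
  qed
  have cont: "continuous_on {l0..l1} (GG D A B C Dw E)"
  proof -
    have nz: "\<And>x. x \<in> {l0..l1} \<Longrightarrow> x \<noteq> 0" "\<And>x. x \<in> {l0..l1} \<Longrightarrow> x^2 - (2*Dw^2+C^2) \<noteq> 0"
      using big unfolding K_def by force+
    show ?thesis unfolding GG_def bb_def cc_def
      apply (intro continuous_intros)
      using nz by auto
  qed
  obtain t where t: "l0 \<le> t" "t \<le> l1" "GG D A B C Dw E t = 0"
    using IVT'[of "GG D A B C Dw E" l0 0 l1] G0 G1 l01 cont by auto
  show ?thesis
    apply (rule that[of t])
    using t big[OF t(1)] l08 unfolding K_def by auto
qed

lemma row_ids:
  assumes t: "t \<noteq> 0" and d: "t^2 - (2*Dw^2+C^2) \<noteq> 0"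
  shows "A + C * cc A B C Dw t + 2*Dw^2 * bb A B C Dw t / t = t * bb A B C Dw t"
    "B + C * bb A B C Dw t = t * cc A B C Dw t"
proof -
  define u where "u = t - 2*Dw^2/t"
  have ut: "t*u = t^2 - 2*Dw^2" unfolding u_def using t by (simp add: field_simps power2_eq_square)
  define \<Delta> where "\<Delta> = t^2 - (2*Dw^2+C^2)"
  have d': "\<Delta> \<noteq> 0" using d \<Delta>_def by simp
  have \<Delta>u: "\<Delta> = t*u - C^2" unfolding \<Delta>_def ut by simp
  have bbx: "bb A B C Dw t = (A*t + C*B)/\<Delta>" unfolding bb_def \<Delta>_def ..
  have ccx: "cc A B C Dw t = (u*B + C*A)/\<Delta>" unfolding cc_def \<Delta>_def u_def ..
  have tu: "2*Dw^2/t = t - u" unfolding u_def by simp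
  have e1: "A + C * ((u*B + C*A)/\<Delta>) = u * ((A*t + C*B)/\<Delta>)"
  proof -
    have "A*\<Delta> + C*(u*B + C*A) = u*(A*t + C*B)" unfolding \<Delta>u by (simp add: algebra_simps power2_eq_square)
    thus ?thesis using d' by (simp add: field_simps)
  qed
  have h2: "2*Dw^2 * bb A B C Dw t / t = (t - u) * bb A B C Dw t"
    using tu by (metis times_divide_eq_left divide_divide_eq_left mult.commute times_divide_eq_right)
  have e1': "A + C * cc A B C Dw t = u * bb A B C Dw t" using e1 unfolding bbx[symmetric] ccx[symmetric] .
  have "A + C * cc A B C Dw t + 2*Dw^2 * bb A B C Dw t / t = (A + C * cc A B C Dw t) + (t - u) * bb A B C Dw t"
    using h2 by simp
  also have "\<dots> = u * bb A B C Dw t + (t - u) * bb A B C Dw t" using e1' by simp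
  also have "\<dots> = t * bb A B C Dw t" by (simp add: algebra_simps)
  finally show "A + C * cc A B C Dw t + 2*Dw^2 * bb A B C Dw t / t = t * bb A B C Dw t" .
  have "B*\<Delta> + C*(A*t + C*B) = t*(u*B + C*A)" unfolding \<Delta>u by (simp add: algebra_simps power2_eq_square)
  thus "B + C * bb A B C Dw t = t * cc A B C Dw t"
    unfolding bbx ccx using d' by (simp add: field_simps)
qed



lemma sombor_row_vec:
  assumes i: "i < n"
  shows "(sombor_mat p n E *\<^sub>v vec n f) $ i =
    (\<Sum>j\<in>{j. j < n \<and> E i j}. sw p (real (deg n E i)) (real (deg n E j)) * f j)"
  unfolding sombor_row[OF i vec_carrier] by (intro sum.cong) auto

lemma sum_const_range: "(\<Sum>j\<in>{a..<b::nat}. (k::real)) = real (b - a) * k"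
  by simp

lemma mid1: "(x::real) < y \<Longrightarrow> x < (x+y)/2" by (simp add: field_simps)
lemma mid2: "(x::real) < y \<Longrightarrow> (x+y)/2 < y" by (simp add: field_simps)

theorem lemma4p1:
  fixes n :: nat and p :: real
  assumes "n \<ge> 7" and "p \<ge> 2"
  shows "rho (sombor_mat p n (U5 n)) < rho (sombor_mat p n (U4 n))"
proof -
  have n7: "7 \<le> n" using assms(1) .
  have p0: "0 < p" using assms(2) by simp
  have p2: "2 \<le> p" using assms(2) .
  define D where "D = real (n-3)"
  have D4: "4 \<le> D" using n7 unfolding D_def by simp
  have Dm2: "real (n-5) = D - 2" unfolding D_def using n7 by (simp add: of_nat_diff)
  have Dm1: "real (n-4) = D - 1" unfolding D_def using n7 by (simp add: of_nat_diff)
  define A where "A = sw p D 4"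
  define B where "B = sw p D 2"
  define C where "C = sw p 4 2"
  define Dw where "Dw = sw p 4 1"
  define E where "E = sw p D 1"
  define W where "W = sw p 3 D"
  define P where "P = sw p 3 2"
  define R where "R = sw p 2 2"
  have hA: "D \<le> A" unfolding A_def using D4 p0 by (intro sw_ge) auto
  have hB: "D \<le> B" unfolding B_def using D4 p0 by (intro sw_ge) auto
  have hE: "D \<le> E" unfolding E_def using D4 p0 by (intro sw_ge) auto
  have hWA: "W \<le> A" unfolding W_def A_def using D4 p0 by (subst sw_comm) (intro sw_mono; auto)
  have hEB: "E \<le> B" unfolding E_def B_def using D4 p0 by (intro sw_mono) auto
  have hE2: "E^2 \<le> D^2 + 1" unfolding E_def using sw_sq_le[of D 1 p] D4 p2 by simp
  have hDw: "4 \<le> Dw" unfolding Dw_def using p0 by (intro sw_ge) auto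
  have hDw2: "Dw^2 \<le> 17" unfolding Dw_def using sw_sq_le[of 4 1 p] p2 by simp
  have hC: "4 \<le> C" unfolding C_def using p0 by (intro sw_ge) auto
  have hC2: "C^2 \<le> 20" unfolding C_def using sw_sq_le[of 4 2 p] p2 by simp
  have hP: "3 \<le> P" unfolding P_def using p0 by (intro sw_ge) auto
  have hP2: "P^2 \<le> 13" unfolding P_def using sw_sq_le[of 3 2 p] p2 by simp
  have hR: "2 \<le> R" unfolding R_def using p0 by (intro sw_ge) auto
  have hR2: "R^2 \<le> 8" unfolding R_def using sw_sq_le[of 2 2 p] p2 by simp
  have hR3: "R < 3"
  proof (rule ccontr)
    assume "\<not> R < 3"
    hence "3^2 \<le> R^2" by (intro power_mono) auto
    thus False using hR2 by simp
  qed
  have hW: "3 \<le> W" unfolding W_def using p0 D4 by (intro sw_ge) auto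
  obtain t where t8: "8 \<le> t" and tD: "D^3 \<le> t^2" and t\<Delta>: "0 < t^2 - (2*Dw^2+C^2)"
    and tG: "GG D A B C Dw E t = 0"
    using exists_root[OF D4 hA hB hE hE2 hDw hDw2 hC hC2] by blast
  have t0: "0 < t" using t8 by simp
  define b where "b = bb A B C Dw t"
  define c where "c = cc A B C Dw t"
  define K where "K = 2*Dw^2+C^2"
  define N where "N = A^2*K + B^2*C^2 + 2*A*B*C*t"
  define S where "S = t*(A*b + B*c)"
  define Q where "Q = t*(t-R) - 2*P^2"
  define T where "T = S - E^2"
  have Sid: "S = A^2 + B^2 + N/(t^2 - K)"
    unfolding S_def N_def K_def b_def c_def using t0 t\<Delta> by (intro S_ident) auto
  have GS: "t^2 - (D-2)*E^2 - S = 0" using tG unfolding GG_def S_def b_def c_def .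
  have K48: "48 \<le> K"
  proof -
    have "Dw^2 \<ge> 4^2" "C^2 \<ge> 4^2" using hDw hC by (intro power_mono; simp)+
    thus ?thesis unfolding K_def by simp
  qed
  have KI: "0 < Q" "Q * (S - E^2) > W^2 * (t*(t-R))"
    using key_ineq[OF t8 K48 refl, of W A E B C P R N S Q] t\<Delta> hWA hW hEB hE hC D4 hP2 hR hR3
      N_def Sid Q_def unfolding K_def by auto
  have TQ: "Q*T > W^2*(t*(t-R))" using KI unfolding T_def by simp
  have T_eq: "T = t^2 - (D-1)*E^2" unfolding T_def using GS by (simp add: algebra_simps)
  have tR: "0 < t - R" using t8 hR3 by simp
  have W0: "0 < W" using hW by simp
  have E0: "0 < E" using hE D4 by simp
  have P0: "0 < P" using hP by simp
  have T0: "0 < T"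
  proof -
    have "0 < W^2*(t*(t-R))" using W0 t0 tR by simp
    hence "0 < Q*T" using TQ by simp
    thus ?thesis using KI(1) by (simp add: zero_less_mult_iff)
  qed
  define f4 where "f4 = (\<lambda>i::nat. if i = 0 then 1 else if i = 1 then b else if i = 2 then c
      else if i \<le> 4 then Dw*b/t else E/t)"
  have ev4: "eigenvalue (sombor_mat p n (U4 n)) t"
  proof (rule eigenvalueI_vec[OF sombor_carrier, of 0 n f4])
    show "0 < n" using n7 by simp
    show "f4 0 \<noteq> 0" unfolding f4_def by simp
    fix i assume i: "i < n"
    have dg: "real (deg n (U4 n) 0) = D" "real (deg n (U4 n) 1) = 4" "real (deg n (U4 n) 2) = 2"
      "real (deg n (U4 n) 3) = 1" "real (deg n (U4 n) 4) = 1"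
      "\<And>k. 5 \<le> k \<Longrightarrow> k < n \<Longrightarrow> real (deg n (U4 n) k) = 1"
      using U4_deg[OF n7] unfolding D_def by auto
    have dg1: "real (deg n (U4 n) (Suc 0)) = 4" using dg(2) by simp
    have row: "(sombor_mat p n (U4 n) *\<^sub>v vec n f4) $ i =
      (\<Sum>j\<in>{j. j < n \<and> U4 n i j}. sw p (real (deg n (U4 n) i)) (real (deg n (U4 n) j)) * f4 j)"
      by (rule sombor_row_vec[OF i])
    have ri: "A + C * c + 2*Dw^2 * b / t = t * b" "B + C * b = t * c"
      unfolding b_def c_def using row_ids[where t=t and Dw=Dw and C=C and A=A and B=B] t0 t\<Delta> by auto
    consider "i = 0" | "i = 1" | "i = 2" | "i = 3" | "i = 4" | "5 \<le> i" by linarith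
    then show "(sombor_mat p n (U4 n) *\<^sub>v vec n f4) $ i = t * f4 i"
    proof cases
      case 1
      have "(sombor_mat p n (U4 n) *\<^sub>v vec n f4) $ i =
          (\<Sum>j\<in>{1,2} \<union> {5..<n}. sw p D (real (deg n (U4 n) j)) * f4 j)"
        using row unfolding 1 U4_nb(1)[OF n7] dg(1) .
      also have "\<dots> = sw p D 4 * b + sw p D 2 * c + (\<Sum>j\<in>{5..<n}. sw p D 1 * (E/t))"
        by (subst sum.union_disjoint) (auto simp: dg dg1 f4_def intro!: sum.cong)
      also have "\<dots> = A*b + B*c + (D-2)*E*(E/t)"
        unfolding A_def B_def E_def sum_const_range Dm2 by simp
      also have "\<dots> = t"
      proof -
        have "t*(A*b + B*c) + (D-2)*E^2 = t*t" using GS unfolding S_def by (simp add: power2_eq_square)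
        hence "(t*(A*b + B*c) + (D-2)*E^2)/t = t" using t0 by simp
        thus ?thesis using t0 by (simp add: add_divide_distrib power2_eq_square)
      qed
      finally show ?thesis using 1 by (simp add: f4_def)
    next
      case 2
      have "(sombor_mat p n (U4 n) *\<^sub>v vec n f4) $ i =
          (\<Sum>j\<in>{0,2,3,4}. sw p 4 (real (deg n (U4 n) j)) * f4 j)"
        using row unfolding 2 U4_nb(2)[OF n7] dg(2) .
      also have "\<dots> = sw p 4 D + sw p 4 2 * c + sw p 4 1 * (Dw*b/t) + sw p 4 1 * (Dw*b/t)"
        by (simp add: dg dg1 f4_def)
      also have "\<dots> = A + C*c + 2*Dw^2*b/t"
        unfolding A_def C_def Dw_def by (simp add: sw_comm[of p 4 D] power2_eq_square)
      also have "\<dots> = t*b" by (rule ri(1))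
      finally show ?thesis using 2 by (simp add: f4_def)
    next
      case 3
      have "(sombor_mat p n (U4 n) *\<^sub>v vec n f4) $ i =
          (\<Sum>j\<in>{0,1}. sw p 2 (real (deg n (U4 n) j)) * f4 j)"
        using row unfolding 3 U4_nb(3)[OF n7] dg(3) .
      also have "\<dots> = sw p 2 D + sw p 2 4 * b"
        by (simp add: dg dg1 f4_def)
      also have "\<dots> = B + C*b" unfolding B_def C_def by (simp add: sw_comm)
      also have "\<dots> = t*c" by (rule ri(2))
      finally show ?thesis using 3 by (simp add: f4_def)
    next
      case 4
      have "(sombor_mat p n (U4 n) *\<^sub>v vec n f4) $ i =
          (\<Sum>j\<in>{1}. sw p 1 (real (deg n (U4 n) j)) * f4 j)"
        using row unfolding 4 U4_nb(4)[OF n7] dg(4) .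
      also have "\<dots> = t * (Dw*b/t)"
        using t0 by (simp add: dg dg1 f4_def Dw_def sw_comm)
      finally show ?thesis using 4 by (simp add: f4_def)
    next
      case 5
      have "(sombor_mat p n (U4 n) *\<^sub>v vec n f4) $ i =
          (\<Sum>j\<in>{1}. sw p 1 (real (deg n (U4 n) j)) * f4 j)"
        using row unfolding 5 U4_nb(5)[OF n7] dg(5) .
      also have "\<dots> = t * (Dw*b/t)"
        using t0 by (simp add: dg dg1 f4_def Dw_def sw_comm)
      finally show ?thesis using 5 by (simp add: f4_def)
    next
      case 6
      have "(sombor_mat p n (U4 n) *\<^sub>v vec n f4) $ i =
          (\<Sum>j\<in>{0}. sw p 1 (real (deg n (U4 n) j)) * f4 j)"
        using row unfolding U4_nb(6)[OF n7 6 i] dg(6)[OF 6 i] .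
      also have "\<dots> = t * (E/t)"
        using t0 by (simp add: dg dg1 f4_def E_def sw_comm)
      finally show ?thesis using 6 by (simp add: f4_def)
    qed
  qed
  have TW: "W*(t-R)/Q < T/(W*t)"
  proof -
    have "W*(t-R)*(W*t) < T*Q" using TQ by (simp add: power2_eq_square mult_ac)
    thus ?thesis using KI(1) W0 t0 by (simp add: divide_less_eq less_divide_eq mult_ac)
  qed
  define a where "a = (W*(t-R)/Q + T/(W*t))/2"
  have a1: "W*(t-R)/Q < a" unfolding a_def using TW by (rule mid1)
  have a2: "a < T/(W*t)" unfolding a_def using TW by (rule mid2)
  have a0: "0 < a" using a1 W0 tR KI(1) by (smt (verit) divide_pos_pos mult_pos_pos)
  have aQ: "W*(t-R) < a*Q" using a1 KI(1) by (simp add: pos_divide_less_eq)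
  hence ab: "2*P^2*a < (t*a - W)*(t-R)" unfolding Q_def by (simp add: algebra_simps)
  have aT: "a*(W*t) < T" using a2 W0 t0 by (simp add: pos_less_divide_eq)
  hence ae: "(D-1)*E^2 < t*(t - W*a)" unfolding T_eq by (simp add: algebra_simps power2_eq_square)
  define lb where "lb = P*a/(t-R)"
  define ub where "ub = (t*a - W)/(2*P)"
  have lbub: "lb < ub"
  proof -
    have "P*a*(2*P) < (t*a - W)*(t-R)" using ab by (simp add: power2_eq_square mult_ac)
    thus ?thesis unfolding lb_def ub_def using tR P0 by (simp add: divide_less_eq less_divide_eq mult_ac)
  qed
  define b' where "b' = (lb + ub)/2"
  have b1: "lb < b'" unfolding b'_def using lbub by (rule mid1)
  have b2: "b' < ub" unfolding b'_def using lbub by (rule mid2)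
  have b0: "0 < b'" using b1 P0 a0 tR unfolding lb_def by (smt (verit) divide_pos_pos mult_pos_pos)
  have row0ineq: "2*P*b' + W < t*a"
  proof -
    have "b'*(2*P) < t*a - W" using b2 P0 unfolding ub_def by (simp add: pos_less_divide_eq)
    thus ?thesis by (simp add: mult_ac)
  qed
  have row1ineq: "P*a + R*b' < t*b'"
  proof -
    have "P*a < b'*(t-R)" using b1 tR unfolding lb_def by (simp add: pos_divide_less_eq)
    thus ?thesis by (simp add: algebra_simps)
  qed
  have D1: "0 < D - 1" using D4 by simp
  define le where "le = E/t"
  define ue where "ue = (t - W*a)/((D-1)*E)"
  have leue: "le < ue"
  proof -
    have "E*((D-1)*E) < (t - W*a)*t" using ae by (simp add: power2_eq_square mult_ac)
    thus ?thesis unfolding le_def ue_def using t0 D1 E0 by (simp add: divide_less_eq less_divide_eq mult_ac)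
  qed
  define e where "e = (le + ue)/2"
  have e1: "le < e" unfolding e_def using leue by (rule mid1)
  have e2: "e < ue" unfolding e_def using leue by (rule mid2)
  have e0: "0 < e" using e1 E0 t0 unfolding le_def by (smt (verit) divide_pos_pos)
  have row3ineq: "W*a + (D-1)*E*e < t"
  proof -
    have "e*((D-1)*E) < t - W*a" using e2 D1 E0 unfolding ue_def by (simp add: pos_less_divide_eq)
    thus ?thesis by (simp add: mult_ac)
  qed
  have rowkineq: "E < t*e"
  proof -
    have "E < e*t" using e1 t0 unfolding le_def by (simp add: pos_divide_less_eq)
    thus ?thesis by (simp add: mult_ac)
  qed
  define f5 where "f5 = (\<lambda>i::nat. if i = 0 then a else if i \<le> 2 then b' else if i = 3 then 1 else e)"
  have f5pos: "\<And>i. 0 < f5 i" unfolding f5_def using a0 b0 e0 by auto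
  have dg5: "real (deg n (U5 n) 0) = 3" "real (deg n (U5 n) 1) = 2" "real (deg n (U5 n) 2) = 2"
      "real (deg n (U5 n) 3) = D"
      "\<And>k. 4 \<le> k \<Longrightarrow> k < n \<Longrightarrow> real (deg n (U5 n) k) = 1"
      using U5_deg[OF n7] unfolding D_def by auto
  have dg51: "real (deg n (U5 n) (Suc 0)) = 2" using dg5(2) by simp
  have bound5: "\<And>k. eigenvalue (sombor_mat p n (U5 n)) k \<Longrightarrow> k < t"
  proof (rule eigenvalue_bound[OF sombor_carrier _ _ vec_carrier])
    show "\<And>i j. i < n \<Longrightarrow> j < n \<Longrightarrow> 0 \<le> sombor_mat p n (U5 n) $$ (i, j)"
      by (rule sombor_nonneg)
    show "\<And>i. i < n \<Longrightarrow> 0 < vec n f5 $ i" using f5pos by simp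
    fix i assume i: "i < n"
    have row: "(sombor_mat p n (U5 n) *\<^sub>v vec n f5) $ i =
      (\<Sum>j\<in>{j. j < n \<and> U5 n i j}. sw p (real (deg n (U5 n) i)) (real (deg n (U5 n) j)) * f5 j)"
      by (rule sombor_row_vec[OF i])
    consider "i = 0" | "i = 1" | "i = 2" | "i = 3" | "4 \<le> i" by linarith
    then show "(sombor_mat p n (U5 n) *\<^sub>v vec n f5) $ i < t * vec n f5 $ i"
    proof cases
      case 1
      have "(sombor_mat p n (U5 n) *\<^sub>v vec n f5) $ i =
          (\<Sum>j\<in>{1,2,3}. sw p 3 (real (deg n (U5 n) j)) * f5 j)"
        using row unfolding 1 U5_nb(1)[OF n7] dg5(1) .
      also have "\<dots> = sw p 3 2 * b' + sw p 3 2 * b' + sw p 3 D"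
        by (simp add: dg5 dg51 f5_def)
      also have "\<dots> = 2*P*b' + W" unfolding P_def W_def by simp
      also have "\<dots> < t*a" by (rule row0ineq)
      finally show ?thesis using 1 i by (simp add: f5_def)
    next
      case 2
      have "(sombor_mat p n (U5 n) *\<^sub>v vec n f5) $ i =
          (\<Sum>j\<in>{0,2}. sw p 2 (real (deg n (U5 n) j)) * f5 j)"
        using row unfolding 2 U5_nb(2)[OF n7] dg5(2) .
      also have "\<dots> = sw p 2 3 * a + sw p 2 2 * b'"
        by (simp add: dg5 dg51 f5_def)
      also have "\<dots> = P*a + R*b'" unfolding P_def R_def by (simp add: sw_comm)
      also have "\<dots> < t*b'" by (rule row1ineq)
      finally show ?thesis using 2 i by (simp add: f5_def)
    next
      case 3
      have "(sombor_mat p n (U5 n) *\<^sub>v vec n f5) $ i =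
          (\<Sum>j\<in>{0,1}. sw p 2 (real (deg n (U5 n) j)) * f5 j)"
        using row unfolding 3 U5_nb(3)[OF n7] dg5(3) .
      also have "\<dots> = sw p 2 3 * a + sw p 2 2 * b'"
        by (simp add: dg5 dg51 f5_def)
      also have "\<dots> = P*a + R*b'" unfolding P_def R_def by (simp add: sw_comm)
      also have "\<dots> < t*b'" by (rule row1ineq)
      finally show ?thesis using 3 i by (simp add: f5_def)
    next
      case 4
      have "(sombor_mat p n (U5 n) *\<^sub>v vec n f5) $ i =
          (\<Sum>j\<in>{0} \<union> {4..<n}. sw p D (real (deg n (U5 n) j)) * f5 j)"
        using row unfolding 4 U5_nb(4)[OF n7] dg5(4) .
      also have "\<dots> = sw p D 3 * a + (\<Sum>j\<in>{4..<n}. sw p D 1 * e)"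
        by (subst sum.union_disjoint) (auto simp: dg5 dg51 f5_def intro!: sum.cong)
      also have "\<dots> = W*a + (D-1)*E*e"
        unfolding W_def E_def sum_const_range Dm1 by (simp add: sw_comm)
      also have "\<dots> < t" by (rule row3ineq)
      finally show ?thesis using 4 i by (simp add: f5_def)
    next
      case 5
      have "(sombor_mat p n (U5 n) *\<^sub>v vec n f5) $ i =
          (\<Sum>j\<in>{3}. sw p 1 (real (deg n (U5 n) j)) * f5 j)"
        using row unfolding U5_nb(5)[OF n7 5 i] dg5(5)[OF 5 i] .
      also have "\<dots> = E"
        by (simp add: dg5 f5_def E_def sw_comm)
      also have "\<dots> < t*e" by (rule rowkineq)
      finally show ?thesis using 5 i by (simp add: f5_def)
    qed
  qed
  (* nonemptiness *)
  define g where "g = (\<lambda>i::nat. if i = 4 then (1::real) else if i = 5 then -1 else 0)"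
  have ev0: "eigenvalue (sombor_mat p n (U5 n)) 0"
  proof (rule eigenvalueI_vec[OF sombor_carrier, of 4 n g])
    show "4 < n" using n7 by simp
    show "g 4 \<noteq> 0" unfolding g_def by simp
    fix i assume i: "i < n"
    have row: "(sombor_mat p n (U5 n) *\<^sub>v vec n g) $ i =
      (\<Sum>j\<in>{j. j < n \<and> U5 n i j}. sw p (real (deg n (U5 n) i)) (real (deg n (U5 n) j)) * g j)"
      by (rule sombor_row_vec[OF i])
    consider "i = 0" | "i = 1" | "i = 2" | "i = 3" | "4 \<le> i" by linarith
    then show "(sombor_mat p n (U5 n) *\<^sub>v vec n g) $ i = 0 * g i"
    proof cases
      case 4
      have "(sombor_mat p n (U5 n) *\<^sub>v vec n g) $ i =
          (\<Sum>j\<in>{0} \<union> {4..<n}. sw p D (real (deg n (U5 n) j)) * g j)"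
        using row unfolding 4 U5_nb(4)[OF n7] dg5(4) .
      also have "\<dots> = (\<Sum>j\<in>{4..<n}. sw p D (real (deg n (U5 n) j)) * g j)"
        by (subst sum.union_disjoint) (auto simp: g_def)
      also have "\<dots> = (\<Sum>j\<in>{4,5} \<union> {6..<n}. sw p D (real (deg n (U5 n) j)) * g j)"
      proof -
        have "{4..<n} = {4,5} \<union> {6..<n}" using n7 by auto
        thus ?thesis by simp
      qed
      also have "\<dots> = sw p D 1 * 1 + sw p D 1 * (-1)"
        using n7 by (subst sum.union_disjoint) (auto simp: g_def dg5)
      also have "\<dots> = 0" by simp
      finally show ?thesis by simp
    next
      case 1
      have "(sombor_mat p n (U5 n) *\<^sub>v vec n g) $ i =
          (\<Sum>j\<in>{1,2,3}. sw p 3 (real (deg n (U5 n) j)) * g j)"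
        using row unfolding 1 U5_nb(1)[OF n7] dg5(1) .
      also have "\<dots> = 0" by (simp add: g_def)
      finally show ?thesis by simp
    next
      case 2
      have "(sombor_mat p n (U5 n) *\<^sub>v vec n g) $ i =
          (\<Sum>j\<in>{0,2}. sw p 2 (real (deg n (U5 n) j)) * g j)"
        using row unfolding 2 U5_nb(2)[OF n7] dg5(2) .
      also have "\<dots> = 0" by (simp add: g_def)
      finally show ?thesis using 2 by (simp add: g_def)
    next
      case 3
      have "(sombor_mat p n (U5 n) *\<^sub>v vec n g) $ i =
          (\<Sum>j\<in>{0,1}. sw p 2 (real (deg n (U5 n) j)) * g j)"
        using row unfolding 3 U5_nb(3)[OF n7] dg5(3) .
      also have "\<dots> = 0" by (simp add: g_def)
      finally show ?thesis by simp
    next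
      case 5
      have "(sombor_mat p n (U5 n) *\<^sub>v vec n g) $ i =
          (\<Sum>j\<in>{3}. sw p 1 (real (deg n (U5 n) j)) * g j)"
        using row unfolding U5_nb(5)[OF n7 5 i] dg5(5)[OF 5 i] .
      also have "\<dots> = 0" by (simp add: g_def)
      finally show ?thesis by simp
    qed
  qed
  have fin4: "finite {k. eigenvalue (sombor_mat p n (U4 n)) k}"
    by (rule finite_eigenvalues[OF sombor_carrier])
  have fin5: "finite {k. eigenvalue (sombor_mat p n (U5 n)) k}"
    by (rule finite_eigenvalues[OF sombor_carrier])
  have "rho (sombor_mat p n (U5 n)) \<in> {k. eigenvalue (sombor_mat p n (U5 n)) k}"
    unfolding rho_def using fin5 ev0 by (intro Max_in) auto
  hence "rho (sombor_mat p n (U5 n)) < t" using bound5 by simp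
  moreover have "t \<le> rho (sombor_mat p n (U4 n))"
    unfolding rho_def using fin4 ev4 by (intro Max_ge) auto
  ultimately show ?thesis by simp
qed

end
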